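(* Let $\mathcal{P}\subseteq[0,1]^n$ be a polytope such that $\mathcal{P}\cap(0,1)^n\neq\emptyset$. If $\mathcal{P}$ is not of the form $\mathcal{P}=[0,1]^n\cap\mathcal{H}$ for some affine subspace $\mathcal{H}\subseteq\mathbb{R}^n$, then no Bernoulli factory for $\mathcal{P}$ exists.
   Context: A Bernoulli factory with output set $V$ (for inputs $x=(x_1,\dots,x_n)\in[0,1]^n$) is a (possibly infinite) rooted binary tree in which every internal node is labeled either by an index $i\in[n]$ or by a known constant $c\in(0,1)$, the two edges from an internal node to its children are labeled $0$ and $1$, and every leaf is labeled by an element of $V$. On input $x$, one starts at the root; at an internal node labeled $i$ one flips a fresh independent coin that equals $1$ with probability $x_i$ (an "$x_i$-coin"), at a node labeled $c$ a fresh independent coin with bias $c$, and follows the edge labeled by the outcome; on reaching a leaf one outputs its label. $\mathcal{F}(x)$ denotes the random output ($\mathcal{F}(x)=\emptyset$ if no leaf is reached); $\mathcal{F}$ terminates almost surely on $S$ if $\Pr[\mathcal{F}(x)=\emptyset]=0$ for all $x\in S$. For a polytope $\mathcal{P}\subseteq[0,1]^n$ with vertex set $V$ (vertices viewed as vectors in $\mathbb{R}^n$), a Bernoulli factory for $\mathcal{P}$ is a Bernoulli factory $\mathcal{F}$ with output set $V$ that terminates almost surely on $\mathcal{P}\cap(0,1)^n$ and satisfies $\mathbb{E}[\mathcal{F}(x)]=x$ for all $x\in\mathcal{P}\cap(0,1)^n$. *)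

theory Defs
  imports "HOL-Analysis.Analysis"
begin

text \<open>Nodes of a Bernoulli factory tree: a leaf with an output label,
  an internal node flipping an x_i-coin (index i of type 'n), or an internal
  node flipping a coin with known constant bias c.\<close>
datatype ('n, 'v) bf_node = is_Leaf: Leaf (leaf_label: 'v) | Coin 'n | Const real

text \<open>A (possibly infinite) rooted binary tree is encoded as a map from
  finite bit-strings (paths from the root; the root is [], the child of p
  along the edge labeled b is p @ [b], True = 1, False = 0) to node labels.
  Only nodes all of whose proper ancestors are internal belong to the tree;
  labels at other positions are irrelevant.\<close>
type_synonym ('n, 'v) bf_tree = "bool list \<Rightarrow> ('n, 'v) bf_node"

definition in_tree :: "('n, 'v) bf_tree \<Rightarrow> bool list \<Rightarrow> bool" where
  "in_tree T p \<longleftrightarrow> (\<forall>k<length p. \<not> is_Leaf (T (take k p)))"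

definition bf_wf :: "'v set \<Rightarrow> ('n, 'v) bf_tree \<Rightarrow> bool" where
  "bf_wf V T \<longleftrightarrow> (\<forall>p. in_tree T p \<longrightarrow>
     (case T p of Leaf v \<Rightarrow> v \<in> V | Coin i \<Rightarrow> True | Const c \<Rightarrow> 0 < c \<and> c < 1))"

fun edge_prob :: "('n::finite, 'v) bf_node \<Rightarrow> bool \<Rightarrow> real ^ 'n \<Rightarrow> real" where
  "edge_prob (Coin i) b x = (if b then x $ i else 1 - x $ i)"
| "edge_prob (Const c) b x = (if b then c else 1 - c)"
| "edge_prob (Leaf v) b x = 0"

definition reach_prob :: "('n::finite, 'v) bf_tree \<Rightarrow> real ^ 'n \<Rightarrow> bool list \<Rightarrow> real" where
  "reach_prob T x p = (\<Prod>k<length p. edge_prob (T (take k p)) (p ! k) x)"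

definition leaf_paths :: "('n, 'v) bf_tree \<Rightarrow> bool list set" where
  "leaf_paths T = {p. in_tree T p \<and> is_Leaf (T p)}"

definition bf_prob :: "('n::finite, 'v) bf_tree \<Rightarrow> real ^ 'n \<Rightarrow> 'v \<Rightarrow> real" where
  "bf_prob T x v = infsum (reach_prob T x) {p \<in> leaf_paths T. T p = Leaf v}"

definition bf_prob_none :: "('n::finite, 'v) bf_tree \<Rightarrow> real ^ 'n \<Rightarrow> real" where
  "bf_prob_none T x = 1 - infsum (reach_prob T x) (leaf_paths T)"

definition unit_cube :: "(real ^ 'n) set" where
  "unit_cube = {x. \<forall>i. 0 \<le> x $ i \<and> x $ i \<le> 1}"

definition open_unit_cube :: "(real ^ 'n) set" where
  "open_unit_cube = {x. \<forall>i. 0 < x $ i \<and> x $ i < 1}"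

definition vertices :: "(real ^ 'n) set \<Rightarrow> (real ^ 'n) set" where
  "vertices P = {v. v extreme_point_of P}"

definition bernoulli_factory_for :: "(real ^ 'n) set \<Rightarrow> ('n::finite, real ^ 'n) bf_tree \<Rightarrow> bool" where
  "bernoulli_factory_for P T \<longleftrightarrow>
     bf_wf (vertices P) T \<and>
     (\<forall>x \<in> P \<inter> open_unit_cube.
        bf_prob_none T x = 0 \<and>
        (\<Sum>v\<in>vertices P. bf_prob T x v *\<^sub>R v) = x)"

end

theory Submission imports Defs begin

lemma reach_pos:
  assumes "bf_wf V T" "x \<in> open_unit_cube" "in_tree T p"
  shows "reach_prob T x p > 0"
  unfolding reach_prob_def
proof (rule prod_pos)
  fix k assume "k \<in> {..<length p}"
  then have k: "k < length p" by simp
  have nl: "\<not> is_Leaf (T (take k p))" using assms(3) k by (simp add: in_tree_def)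
  have it: "in_tree T (take k p)" using assms(3) k by (auto simp: in_tree_def min_def)
  have wf: "case T (take k p) of Leaf v \<Rightarrow> v \<in> V | Coin i \<Rightarrow> True | Const c \<Rightarrow> 0<c \<and> c<1"
    using assms(1) it by (simp add: bf_wf_def)
  show "edge_prob (T (take k p)) (p!k) x > 0"
    using nl wf assms(2) by (cases "T (take k p)") (auto simp: open_unit_cube_def)
qed

lemma factory_coeffs:
  assumes bf: "bernoulli_factory_for P T" and fin: "finite (vertices P)"
    and x: "x \<in> P \<inter> open_unit_cube"
  shows "(\<forall>v\<in>vertices P. bf_prob T x v \<ge> 0) \<and> sum (bf_prob T x) (vertices P) = 1
    \<and> (\<Sum>v\<in>vertices P. bf_prob T x v *\<^sub>R v) = x
    \<and> (\<forall>v\<in>vertices P. bf_prob T x v > 0 \<longleftrightarrow> (\<exists>p\<in>leaf_paths T. T p = Leaf v))"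
proof -
  have wf: "bf_wf (vertices P) T" and none: "bf_prob_none T x = 0"
    and comb: "(\<Sum>v\<in>vertices P. bf_prob T x v *\<^sub>R v) = x"
    using bf x unfolding bernoulli_factory_for_def by auto
  have S1: "infsum (reach_prob T x) (leaf_paths T) = 1" using none by (simp add: bf_prob_none_def)
  have summ: "reach_prob T x summable_on leaf_paths T"
    using S1 infsum_not_exists by fastforce
  have pos: "\<And>p. p \<in> leaf_paths T \<Longrightarrow> reach_prob T x p > 0"
    using reach_pos[OF wf] x by (auto simp: leaf_paths_def)
  have summv: "\<And>v. reach_prob T x summable_on {p\<in>leaf_paths T. T p = Leaf v}"
    by (rule summable_on_subset_banach[OF summ]) auto
  have nonneg: "\<And>v. bf_prob T x v \<ge> 0"
    unfolding bf_prob_def using pos by (intro infsum_nonneg) (auto intro: less_imp_le)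
  have union: "leaf_paths T = (\<Union>v\<in>vertices P. {p\<in>leaf_paths T. T p = Leaf v})"
  proof (intro equalityI subsetI)
    fix p assume p: "p \<in> leaf_paths T"
    then obtain v where v: "T p = Leaf v" by (auto simp: leaf_paths_def is_Leaf_def)
    have "v \<in> vertices P" using wf p v by (auto simp: bf_wf_def leaf_paths_def split: bf_node.splits)
    then show "p \<in> (\<Union>v\<in>vertices P. {p\<in>leaf_paths T. T p = Leaf v})" using p v by auto
  qed auto
  have sum1: "sum (bf_prob T x) (vertices P) = 1"
    unfolding bf_prob_def
    by (subst sum_infsum[OF fin summv]) (auto simp flip: union simp: S1)
  have iff: "bf_prob T x v > 0 \<longleftrightarrow> (\<exists>p\<in>leaf_paths T. T p = Leaf v)" for v
  proof
    assume "bf_prob T x v > 0"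
    then show "\<exists>p\<in>leaf_paths T. T p = Leaf v"
    proof (rule contrapos_pp)
      assume "\<not> (\<exists>p\<in>leaf_paths T. T p = Leaf v)"
      then have E: "{p \<in> leaf_paths T. T p = Leaf v} = {}" by auto
      show "\<not> bf_prob T x v > 0" unfolding bf_prob_def by (subst E) simp
    qed
  next
    assume "\<exists>p\<in>leaf_paths T. T p = Leaf v"
    then obtain p where p: "p \<in> leaf_paths T" "T p = Leaf v" by auto
    have "infsum (reach_prob T x) {p} \<le> bf_prob T x v"
      unfolding bf_prob_def
      by (rule infsum_mono_neutral[OF _ summv]) (use p pos in \<open>auto intro: less_imp_le\<close>)
    then show "bf_prob T x v > 0" using pos[OF p(1)] by simp
  qed
  show ?thesis using nonneg sum1 comb iff by auto
qed

lemma key_step: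
  assumes bf: "bernoulli_factory_for P T" and fin: "finite (vertices P)"
    and PV: "P = convex hull (vertices P)"
    and z: "z \<in> P \<inter> open_unit_cube" and w: "w \<in> P \<inter> open_unit_cube"
  shows "\<exists>e>0. \<forall>\<epsilon>. 0 < \<epsilon> \<and> \<epsilon> \<le> e \<longrightarrow> z + \<epsilon> *\<^sub>R (z - w) \<in> P"
proof -
  define V where "V = vertices P"
  define pz where "pz = bf_prob T z"
  define pw where "pw = bf_prob T w"
  have Z: "(\<forall>v\<in>V. pz v \<ge> 0) \<and> sum pz V = 1 \<and> (\<Sum>v\<in>V. pz v *\<^sub>R v) = z
    \<and> (\<forall>v\<in>V. pz v > 0 \<longleftrightarrow> (\<exists>p\<in>leaf_paths T. T p = Leaf v))"
    unfolding V_def pz_def by (rule factory_coeffs[OF bf fin z])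
  have W: "(\<forall>v\<in>V. pw v \<ge> 0) \<and> sum pw V = 1 \<and> (\<Sum>v\<in>V. pw v *\<^sub>R v) = w
    \<and> (\<forall>v\<in>V. pw v > 0 \<longleftrightarrow> (\<exists>p\<in>leaf_paths T. T p = Leaf v))"
    unfolding V_def pw_def by (rule factory_coeffs[OF bf fin w])
  have finV: "finite V" using fin by (simp add: V_def)
  define Q where "Q = {v\<in>V. pz v > 0}"
  have finQ: "finite Q" using finV by (simp add: Q_def)
  have Qne: "Q \<noteq> {}"
  proof
    assume "Q = {}"
    then have "\<forall>v\<in>V. pz v = 0" using Z by (force simp: Q_def)
    then have "sum pz V = 0" by simp
    then show False using Z by simp
  qed
  define e where "e = Min (pz ` Q)"
  have epos: "e > 0" unfolding e_def using finQ Qne by (auto simp: Q_def)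
  have ele: "\<And>v. v \<in> Q \<Longrightarrow> e \<le> pz v" unfolding e_def using finQ by simp
  have pwle: "\<And>v. v \<in> V \<Longrightarrow> pw v \<le> 1"
  proof -
    fix v assume v: "v \<in> V"
    have "pw v \<le> sum pw V" by (rule member_le_sum) (use v W finV in auto)
    then show "pw v \<le> 1" using W by simp
  qed
  have "\<forall>\<epsilon>. 0 < \<epsilon> \<and> \<epsilon> \<le> e \<longrightarrow> z + \<epsilon> *\<^sub>R (z - w) \<in> P"
  proof (intro allI impI)
    fix \<epsilon> :: real assume ep: "0 < \<epsilon> \<and> \<epsilon> \<le> e"
    define c where "c v = (1 + \<epsilon>) * pz v - \<epsilon> * pw v" for v
    have cnn: "\<forall>v\<in>V. 0 \<le> c v"
    proof
      fix v assume v: "v \<in> V"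
      show "0 \<le> c v"
      proof (cases "pz v > 0")
        case True
        then have "v \<in> Q" using v by (simp add: Q_def)
        then have "\<epsilon> \<le> pz v" using ele ep by force
        moreover have "\<epsilon> * pw v \<le> \<epsilon>" using pwle[OF v] ep by (simp add: mult_left_le)
        moreover have "\<epsilon> * pz v \<ge> 0" using True ep by simp
        ultimately show ?thesis by (simp add: c_def algebra_simps)
      next
        case False
        then have "pz v = 0" using Z v by force
        moreover have "\<not> pw v > 0" using False Z W v by blast
        then have "pw v = 0" using W v by force
        ultimately show ?thesis by (simp add: c_def)
      qed
    qed
    have csum: "sum c V = 1"
      using Z W by (simp add: c_def sum_subtractf sum_distrib_left[symmetric])
    have "(\<Sum>v\<in>V. c v *\<^sub>R v) = (1 + \<epsilon>) *\<^sub>R (\<Sum>v\<in>V. pz v *\<^sub>R v) - \<epsilon> *\<^sub>R (\<Sum>v\<in>V. pw v *\<^sub>R v)"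
      by (simp add: c_def scaleR_diff_left scaleR_sum_right sum_subtractf)
    also have "\<dots> = z + \<epsilon> *\<^sub>R (z - w)" using Z W by (simp add: algebra_simps)
    finally have "(\<Sum>v\<in>V. c v *\<^sub>R v) = z + \<epsilon> *\<^sub>R (z - w)" .
    then have "z + \<epsilon> *\<^sub>R (z - w) \<in> convex hull V"
      unfolding convex_hull_finite[OF finV] using cnn csum by blast
    then show "z + \<epsilon> *\<^sub>R (z - w) \<in> P" using PV by (simp add: V_def)
  qed
  then show ?thesis using epos by blast
qed

theorem theorem4p1:
  fixes P :: "(real ^ 'n) set"
  assumes "polytope P"
    and "P \<subseteq> unit_cube"
    and "P \<inter> open_unit_cube \<noteq> {}"
    and "\<not> (\<exists>H. affine H \<and> P = unit_cube \<inter> H)"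
  shows "\<not> (\<exists>T. bernoulli_factory_for P T)"
proof
  assume "\<exists>T. bernoulli_factory_for P T"
  then obtain T where bf: "bernoulli_factory_for P T" by blast
  obtain S where S: "finite S" "P = convex hull S" using assms(1) polytope_def by blast
  have fin: "finite (vertices P)"
    using S extreme_points_of_convex_hull[of S] finite_subset unfolding vertices_def by metis
  have cpt: "compact P" using assms(1) polytope_imp_compact by blast
  have cvx: "convex P" using assms(1) polytope_imp_convex by blast
  have PV: "P = convex hull (vertices P)"
    unfolding vertices_def by (rule Krein_Milman_Minkowski[OF cpt cvx])
  have Paff: "P \<subseteq> affine hull P" by (rule hull_subset)
  have "P \<noteq> unit_cube \<inter> affine hull P" using assms(4) affine_affine_hull by blast
  moreover have "P \<subseteq> unit_cube \<inter> affine hull P" using assms(2) Paff by blast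
  ultimately obtain y where y: "y \<in> unit_cube" "y \<in> affine hull P" "y \<notin> P" by blast
  obtain a where a: "a \<in> P" "a \<in> open_unit_cube" using assms(3) by blast
  have "rel_interior P \<noteq> {}" using rel_interior_eq_empty[OF cvx] a by blast
  then obtain b where b: "b \<in> rel_interior P" by blast
  have bP: "b \<in> P" using b rel_interior_subset by blast
  define x0 where "x0 = midpoint b a"
  have x0ri: "x0 \<in> rel_interior P"
  proof (cases "a = b")
    case True then show ?thesis using b by (simp add: x0_def)
  next
    case False
    have "x0 \<in> open_segment b a" using False by (simp add: x0_def)
    moreover have "a \<in> closure P" using a closure_subset by blast
    ultimately show ?thesis using rel_interior_closure_convex_segment[OF cvx b, of a] by blast
  qed
  have x0P: "x0 \<in> P" using x0ri rel_interior_subset by blast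
  have bcube: "b \<in> unit_cube" using bP assms(2) by blast
  have x0oc: "x0 \<in> open_unit_cube"
    unfolding open_unit_cube_def
  proof (intro CollectI allI)
    fix i
    have "0 < a $ i" "a $ i < 1" "0 \<le> b $ i" "b $ i \<le> 1"
      using a(2) bcube by (auto simp: open_unit_cube_def unit_cube_def)
    then show "0 < x0 $ i \<and> x0 $ i < 1" by (simp add: x0_def midpoint_def)
  qed
  obtain r where r: "r > 0" "ball x0 r \<inter> affine hull P \<subseteq> P"
    using x0ri mem_rel_interior_ball by blast
  define f where "f t = x0 + t *\<^sub>R (y - x0)" for t :: real
  have faff: "f t \<in> affine hull P" for t
  proof -
    have "(1 - t) *\<^sub>R x0 + t *\<^sub>R y \<in> affine hull P"
      by (rule mem_affine[OF affine_affine_hull]) (use x0P Paff y(2) in auto)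
    then show ?thesis by (simp add: f_def algebra_simps)
  qed
  define S' where "S' = {0..1} \<inter> f -` P"
  have "closed (f -` P)"
  proof (rule continuous_closed_vimage)
    show "closed P" using cpt by (rule compact_imp_closed)
    show "continuous (at x) f" for x unfolding f_def[abs_def] by (intro continuous_intros)
  qed
  then have cS': "compact S'" unfolding S'_def by (intro compact_Int_closed) auto
  have "0 \<in> S'" using x0P by (simp add: S'_def f_def)
  then obtain ts where ts: "ts \<in> S'" "\<And>t. t \<in> S' \<Longrightarrow> t \<le> ts"
    using compact_attains_sup[OF cS'] by blast
  define t0 where "t0 = min 1 (r / (2 * (norm (y - x0) + 1)))"
  have rpos: "r / (2 * (norm (y - x0) + 1)) > 0" using r by (intro divide_pos_pos mult_pos_pos) (auto intro: add_nonneg_pos)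
  then have t0pos: "t0 > 0" by (simp add: t0_def)
  have "t0 * norm (y - x0) < r"
  proof -
    have "t0 * norm (y - x0) \<le> (r / (2 * (norm (y - x0) + 1))) * (norm (y - x0) + 1)"
      by (rule mult_mono) (use rpos in \<open>auto simp: t0_def\<close>)
    also have "\<dots> = r / 2"
    proof -
      have np: "norm (y - x0) + 1 > 0" by (smt (verit) norm_ge_zero)
      show ?thesis using np by (simp add: field_simps)
    qed
    finally show ?thesis using r by simp
  qed
  then have "f t0 \<in> ball x0 r" using t0pos by (simp add: f_def dist_norm)
  then have "f t0 \<in> P" using r faff by blast
  then have "t0 \<in> S'" using t0pos by (simp add: S'_def t0_def)
  then have tspos: "ts > 0" using ts t0pos by force
  have ts1: "ts < 1"
  proof -
    have "ts \<le> 1" using ts by (simp add: S'_def)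
    moreover have "ts \<noteq> 1" using ts(1) y(3) by (auto simp: S'_def f_def)
    ultimately show ?thesis by simp
  qed
  define z where "z = f ts"
  have zP: "z \<in> P" using ts by (simp add: S'_def z_def)
  have zoc: "z \<in> open_unit_cube"
    unfolding open_unit_cube_def
  proof (intro CollectI allI)
    fix i
    have h: "0 < x0 $ i" "x0 $ i < 1" "0 \<le> y $ i" "y $ i \<le> 1"
      using x0oc y(1) by (auto simp: open_unit_cube_def unit_cube_def)
    have e: "z $ i = (1 - ts) * x0 $ i + ts * y $ i" by (simp add: z_def f_def algebra_simps)
    have "(1 - ts) * x0 $ i > 0" using h ts1 by simp
    moreover have "ts * y $ i \<ge> 0" using h tspos by simp
    moreover have "(1 - ts) * x0 $ i < (1 - ts)" using h ts1 by simp
    moreover have "ts * y $ i \<le> ts" using h tspos by (simp add: mult_left_le)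
    ultimately show "0 < z $ i \<and> z $ i < 1" unfolding e by linarith
  qed
  obtain e where e: "e > 0" "\<And>\<epsilon>. 0 < \<epsilon> \<and> \<epsilon> \<le> e \<Longrightarrow> z + \<epsilon> *\<^sub>R (z - x0) \<in> P"
    using key_step[OF bf fin PV, of z x0] zP zoc x0P x0oc by blast
  define \<epsilon> where "\<epsilon> = min e ((1 - ts) / ts)"
  have epos: "\<epsilon> > 0" using e ts1 tspos by (simp add: \<epsilon>_def)
  have "\<epsilon> \<le> (1 - ts) / ts" by (simp add: \<epsilon>_def)
  then have "ts * \<epsilon> \<le> ts * ((1 - ts) / ts)" using tspos by (intro mult_left_mono) auto
  also have "ts * ((1 - ts) / ts) = 1 - ts" using tspos by simp
  finally have le1: "ts * (1 + \<epsilon>) \<le> 1" by (simp add: algebra_simps)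
  have "z + \<epsilon> *\<^sub>R (z - x0) = f (ts * (1 + \<epsilon>))" by (simp add: z_def f_def algebra_simps)
  then have "f (ts * (1 + \<epsilon>)) \<in> P" using e(2)[of \<epsilon>] epos by (simp add: \<epsilon>_def)
  then have "ts * (1 + \<epsilon>) \<in> S'" using le1 tspos epos by (simp add: S'_def)
  then have "ts * (1 + \<epsilon>) \<le> ts" using ts(2) by blast
  moreover have "ts * (1 + \<epsilon>) > ts" using tspos epos by (simp add: algebra_simps)
  ultimately show False by simp
qed

end
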